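(* Let $(G,E,\phi_c)$ be a twisted Exel–Pardo tuple and $e\in E^1$. The following are equivalent: (i) $\operatorname{Ann}_{\ell[G]}(ee^* )=0$; (ii) the only $g\in G$ which fixes $e$ strongly (i.e. $g(e)=e$ and $\phi(g,e)=1$) is $g=1$; (iii) the map $\nabla_e:G\to E^1\times G$, $g\mapsto(g^{-1}(e),\phi(g,g^{-1}(e)))$ is injective.
   Context: $\ell$ is a commutative unital ring, $\mathcal U(\ell)$ its unit group. A twisted Exel–Pardo tuple $(G,E,\phi_c)$: a graph $E=(E^0,E^1,r,s)$, a group $G$ acting on $E$ by graph automorphisms, $\phi:G\times E^1\to G$ with $\phi(gh,e)=\phi(g,h(e))\phi(h,e)$ and $\phi(g,e)(v)=g(v)$ for $v\in E^0$, and $c:G\times E^1\to\mathcal U(\ell)$ with $c(gh,e)=c(g,h(e))c(h,e)$. The Cohn algebra $C(G,E,\phi_c)$ is the $\ell$-algebra generated by $e,e^*$ ($e\in E^1$), $vg$ ($v\in E^0,g\in G$), $v:=v1$, subject to $e=s(e)er(e)$, $e^*=r(e)e^*s(e)$, $e^*f=\delta_{e,f}r(e)$, $(vg)(wh)=\delta_{v,g(w)}v(gh)$, $(vg)e=\delta_{v,g(s(e))}c(g,e)g(e)(r(g(e))\phi(g,e))$, $e^*(vg)=\delta_{v,s(e)}c(g,g^{-1}(e))(r(e)\phi(g,g^{-1}(e)))(g^{-1}(e))^*$. The group algebra $\ell[G]$ acts on the right on $ee^*\in C(G,E,\phi_c)$ by $ee^*\cdot g:=ee^*(s(e)g)$,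 and $\operatorname{Ann}_{\ell[G]}(ee^* )=\{\sum_g\lambda_gg\in\ell[G]:\sum_g\lambda_g\,ee^*(s(e)g)=0\}$ (this condition is the same whether computed in $C(G,E,\phi_c)$ or in the untwisted $C(G,E,\phi)$, with $c\equiv1$). *)

theory Defs
  imports "HOL-Algebra.Group"
begin

text \<open>The graph is E = (E0, E1, r, s) with E0 = UNIV :: 'v set and E1 = UNIV :: 'e set.\<close>

definition twisted_EP_tuple ::
  "('g, 'm) monoid_scheme \<Rightarrow> ('e \<Rightarrow> 'v) \<Rightarrow> ('e \<Rightarrow> 'v) \<Rightarrow> ('g \<Rightarrow> 'v \<Rightarrow> 'v) \<Rightarrow> ('g \<Rightarrow> 'e \<Rightarrow> 'e)
     \<Rightarrow> ('g \<Rightarrow> 'e \<Rightarrow> 'g) \<Rightarrow> ('g \<Rightarrow> 'e \<Rightarrow> 'l::comm_ring_1) \<Rightarrow> bool" where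
  "twisted_EP_tuple G r s actv acte phi c \<longleftrightarrow>
     group G
   \<and> actv \<one>\<^bsub>G\<^esub> = id \<and> acte \<one>\<^bsub>G\<^esub> = id
   \<and> (\<forall>g\<in>carrier G. \<forall>h\<in>carrier G. actv (g \<otimes>\<^bsub>G\<^esub> h) = actv g \<circ> actv h
                                      \<and> acte (g \<otimes>\<^bsub>G\<^esub> h) = acte g \<circ> acte h)
   \<and> (\<forall>g\<in>carrier G. \<forall>e. s (acte g e) = actv g (s e) \<and> r (acte g e) = actv g (r e))
   \<and> (\<forall>g\<in>carrier G. \<forall>e. phi g e \<in> carrier G)
   \<and> (\<forall>g\<in>carrier G. \<forall>h\<in>carrier G. \<forall>e.
          phi (g \<otimes>\<^bsub>G\<^esub> h) e = phi g (acte h e) \<otimes>\<^bsub>G\<^esub> phi h e)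
   \<and> (\<forall>g\<in>carrier G. \<forall>e. actv (phi g e) = actv g)
   \<and> (\<forall>g\<in>carrier G. \<forall>e. c g e dvd 1)
   \<and> (\<forall>g\<in>carrier G. \<forall>h\<in>carrier G. \<forall>e.
          c (g \<otimes>\<^bsub>G\<^esub> h) e = c g (acte h e) * c h e)"

text \<open>Elements are functions from words (lists of generators) to 'l; all elements we
  build have finite support.\<close>

definition fmon :: "'x list \<Rightarrow> 'x list \<Rightarrow> 'l::comm_ring_1" where
  "fmon w = (\<lambda>u. if u = w then 1 else 0)"

definition fmul :: "('x list \<Rightarrow> 'l::comm_ring_1) \<Rightarrow> ('x list \<Rightarrow> 'l) \<Rightarrow> 'x list \<Rightarrow> 'l" where
  "fmul p q = (\<lambda>w. \<Sum>i\<in>{0..length w}. p (take i w) * q (drop i w))"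

definition fsmult :: "'l::comm_ring_1 \<Rightarrow> ('x list \<Rightarrow> 'l) \<Rightarrow> 'x list \<Rightarrow> 'l" where
  "fsmult a p = (\<lambda>w. a * p w)"

definition fadd :: "('x list \<Rightarrow> 'l::comm_ring_1) \<Rightarrow> ('x list \<Rightarrow> 'l) \<Rightarrow> 'x list \<Rightarrow> 'l" where
  "fadd p q = (\<lambda>w. p w + q w)"

definition fdiff :: "('x list \<Rightarrow> 'l::comm_ring_1) \<Rightarrow> ('x list \<Rightarrow> 'l) \<Rightarrow> 'x list \<Rightarrow> 'l" where
  "fdiff p q = (\<lambda>w. p w - q w)"

definition fzero :: "'x list \<Rightarrow> 'l::comm_ring_1" where
  "fzero = (\<lambda>_. 0)"

inductive_set gen_ideal :: "('x list \<Rightarrow> 'l::comm_ring_1) set \<Rightarrow> ('x list \<Rightarrow> 'l) set"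
  for Rel where
  zero: "fzero \<in> gen_ideal Rel"
| gen: "\<rho> \<in> Rel \<Longrightarrow> fsmult a (fmul (fmul (fmon u) \<rho>) (fmon v)) \<in> gen_ideal Rel"
| add: "x \<in> gen_ideal Rel \<Longrightarrow> y \<in> gen_ideal Rel \<Longrightarrow> fadd x y \<in> gen_ideal Rel"

datatype ('v, 'e, 'g) cgen = Ed 'e | Es 'e | Vg 'v 'g
  \<comment> \<open>Ed e is e, Es e is e*, Vg v g is vg; the vertex v is Vg v 1.\<close>

definition cohn_rels ::
  "('g, 'm) monoid_scheme \<Rightarrow> ('e \<Rightarrow> 'v) \<Rightarrow> ('e \<Rightarrow> 'v) \<Rightarrow> ('g \<Rightarrow> 'v \<Rightarrow> 'v) \<Rightarrow> ('g \<Rightarrow> 'e \<Rightarrow> 'e)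
     \<Rightarrow> ('g \<Rightarrow> 'e \<Rightarrow> 'g) \<Rightarrow> ('g \<Rightarrow> 'e \<Rightarrow> 'l::comm_ring_1)
     \<Rightarrow> (('v, 'e, 'g) cgen list \<Rightarrow> 'l) set" where
  "cohn_rels G r s actv acte phi c =
     {fdiff (fmon [Ed e]) (fmon [Vg (s e) \<one>\<^bsub>G\<^esub>, Ed e, Vg (r e) \<one>\<^bsub>G\<^esub>]) | e. True}
   \<union> {fdiff (fmon [Es e]) (fmon [Vg (r e) \<one>\<^bsub>G\<^esub>, Es e, Vg (s e) \<one>\<^bsub>G\<^esub>]) | e. True}
   \<union> {fdiff (fmon [Es e, Ed f]) (if e = f then fmon [Vg (r e) \<one>\<^bsub>G\<^esub>] else fzero) | e f. True}
   \<union> {fdiff (fmon [Vg v g, Vg w h])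
            (if v = actv g w then fmon [Vg v (g \<otimes>\<^bsub>G\<^esub> h)] else fzero)
        | v w g h. g \<in> carrier G \<and> h \<in> carrier G}
   \<union> {fdiff (fmon [Vg v g, Ed e])
            (if v = actv g (s e)
             then fsmult (c g e) (fmon [Ed (acte g e), Vg (r (acte g e)) (phi g e)])
             else fzero)
        | v g e. g \<in> carrier G}
   \<union> {fdiff (fmon [Es e, Vg v g])
            (if v = s e
             then fsmult (c g (acte (inv\<^bsub>G\<^esub> g) e))
                    (fmon [Vg (r e) (phi g (acte (inv\<^bsub>G\<^esub> g) e)), Es (acte (inv\<^bsub>G\<^esub> g) e)])
             else fzero)
        | v g e. g \<in> carrier G}"

definition cohn_zero where
  "cohn_zero G r s actv acte phi c x \<longleftrightarrow> x \<in> gen_ideal (cohn_rels G r s actv acte phi c)"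

text \<open>Annihilator in the group algebra l[G] (finitely supported functions G -> l) of ee*,
  for the right action ee* . g = ee*(s(e)g).\<close>

definition EP_Ann ::
  "('g, 'm) monoid_scheme \<Rightarrow> ('e \<Rightarrow> 'v) \<Rightarrow> ('e \<Rightarrow> 'v) \<Rightarrow> ('g \<Rightarrow> 'v \<Rightarrow> 'v) \<Rightarrow> ('g \<Rightarrow> 'e \<Rightarrow> 'e)
     \<Rightarrow> ('g \<Rightarrow> 'e \<Rightarrow> 'g) \<Rightarrow> ('g \<Rightarrow> 'e \<Rightarrow> 'l::comm_ring_1) \<Rightarrow> 'e \<Rightarrow> ('g \<Rightarrow> 'l) set" where
  "EP_Ann G r s actv acte phi c e =
     {lam. finite {g. lam g \<noteq> 0} \<and> (\<forall>g. g \<notin> carrier G \<longrightarrow> lam g = 0)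
        \<and> cohn_zero G r s actv acte phi c
            (\<lambda>w. \<Sum>g\<in>{g. lam g \<noteq> 0}. lam g * fmon [Ed e, Es e, Vg (s e) g] w)}"

definition nabla ::
  "('g, 'm) monoid_scheme \<Rightarrow> ('g \<Rightarrow> 'e \<Rightarrow> 'e) \<Rightarrow> ('g \<Rightarrow> 'e \<Rightarrow> 'g) \<Rightarrow> 'e \<Rightarrow> 'g \<Rightarrow> 'e \<times> 'g" where
  "nabla G acte phi e g = (acte (inv\<^bsub>G\<^esub> g) e, phi g (acte (inv\<^bsub>G\<^esub> g) e))"

end

theory Submission
  imports Defs
begin


locale EPt =
  fixes G :: "('g, 'm) monoid_scheme"
    and r s :: "'e \<Rightarrow> 'v"
    and actv :: "'g \<Rightarrow> 'v \<Rightarrow> 'v" and acte :: "'g \<Rightarrow> 'e \<Rightarrow> 'e"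
    and phi :: "'g \<Rightarrow> 'e \<Rightarrow> 'g" and c :: "'g \<Rightarrow> 'e \<Rightarrow> 'l::comm_ring_1"
  assumes tup: "twisted_EP_tuple G r s actv acte phi c"
begin

sublocale group G using tup by (simp add: twisted_EP_tuple_def)

lemma actv1: "actv \<one>\<^bsub>G\<^esub> = id" and acte1: "acte \<one>\<^bsub>G\<^esub> = id"
  using tup by (simp_all add: twisted_EP_tuple_def)

lemma actv_mult: "g \<in> carrier G \<Longrightarrow> h \<in> carrier G \<Longrightarrow> actv (g \<otimes>\<^bsub>G\<^esub> h) x = actv g (actv h x)"
  and acte_mult: "g \<in> carrier G \<Longrightarrow> h \<in> carrier G \<Longrightarrow> acte (g \<otimes>\<^bsub>G\<^esub> h) f = acte g (acte h f)"
  using tup by (simp_all add: twisted_EP_tuple_def)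

lemma s_act: "g \<in> carrier G \<Longrightarrow> s (acte g f) = actv g (s f)"
  and r_act: "g \<in> carrier G \<Longrightarrow> r (acte g f) = actv g (r f)"
  using tup by (simp_all add: twisted_EP_tuple_def)

lemma phi_closed[simp]: "g \<in> carrier G \<Longrightarrow> phi g f \<in> carrier G"
  using tup by (simp_all add: twisted_EP_tuple_def)

lemma phi_mult: "g \<in> carrier G \<Longrightarrow> h \<in> carrier G \<Longrightarrow>
   phi (g \<otimes>\<^bsub>G\<^esub> h) f = phi g (acte h f) \<otimes>\<^bsub>G\<^esub> phi h f"
  using tup by (simp_all add: twisted_EP_tuple_def)

lemma actv_phi[simp]: "g \<in> carrier G \<Longrightarrow> actv (phi g f) = actv g"
  using tup by (simp_all add: twisted_EP_tuple_def)

lemma c_unit: "g \<in> carrier G \<Longrightarrow> c g f dvd 1"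
  using tup by (simp_all add: twisted_EP_tuple_def)

lemma c_mult: "g \<in> carrier G \<Longrightarrow> h \<in> carrier G \<Longrightarrow>
   c (g \<otimes>\<^bsub>G\<^esub> h) f = c g (acte h f) * c h f"
  using tup by (simp_all add: twisted_EP_tuple_def)

lemma phi_one[simp]: "phi \<one>\<^bsub>G\<^esub> f = \<one>\<^bsub>G\<^esub>"
proof -
  have "phi \<one>\<^bsub>G\<^esub> f = phi \<one>\<^bsub>G\<^esub> f \<otimes>\<^bsub>G\<^esub> phi \<one>\<^bsub>G\<^esub> f"
    using phi_mult[of "\<one>\<^bsub>G\<^esub>" "\<one>\<^bsub>G\<^esub>" f] by (simp add: acte1)
  then show ?thesis
    by (metis one_closed phi_closed r_cancel_one')
qed

lemma c_one[simp]: "c \<one>\<^bsub>G\<^esub> f = 1"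
proof -
  have h: "c \<one>\<^bsub>G\<^esub> f = c \<one>\<^bsub>G\<^esub> f * c \<one>\<^bsub>G\<^esub> f"
    using c_mult[of "\<one>\<^bsub>G\<^esub>" "\<one>\<^bsub>G\<^esub>" f] by (simp add: acte1)
  obtain u where u: "1 = c \<one>\<^bsub>G\<^esub> f * u" using c_unit[of "\<one>\<^bsub>G\<^esub>" f] by (auto elim: dvdE)
  have "c \<one>\<^bsub>G\<^esub> f * u = c \<one>\<^bsub>G\<^esub> f * (c \<one>\<^bsub>G\<^esub> f * u)"
    using h by (metis mult.assoc)
  then show ?thesis using u by simp
qed

lemma acte_inv1[simp]: "g \<in> carrier G \<Longrightarrow> acte (inv\<^bsub>G\<^esub> g) (acte g f) = f"
  by (metis acte1 acte_mult id_apply inv_closed l_inv)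
lemma acte_inv2[simp]: "g \<in> carrier G \<Longrightarrow> acte g (acte (inv\<^bsub>G\<^esub> g) f) = f"
  by (metis acte1 acte_mult id_apply inv_closed r_inv)
lemma actv_inv1[simp]: "g \<in> carrier G \<Longrightarrow> actv (inv\<^bsub>G\<^esub> g) (actv g f) = f"
  by (metis actv1 actv_mult id_apply inv_closed l_inv)
lemma actv_inv2[simp]: "g \<in> carrier G \<Longrightarrow> actv g (actv (inv\<^bsub>G\<^esub> g) f) = f"
  by (metis actv1 actv_mult id_apply inv_closed r_inv)
lemma actv_inj[simp]: "g \<in> carrier G \<Longrightarrow> actv g x = actv g y \<longleftrightarrow> x = y"
  by (metis actv_inv1)
lemma acte_inj[simp]: "g \<in> carrier G \<Longrightarrow> acte g x = acte g y \<longleftrightarrow> x = y"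
  by (metis acte_inv1)

fun actL :: "'g \<Rightarrow> 'e list \<Rightarrow> 'e list" where
  "actL g [] = []"
| "actL g (f # be) = acte g f # actL (phi g f) be"

fun phiL :: "'g \<Rightarrow> 'e list \<Rightarrow> 'g" where
  "phiL g [] = g"
| "phiL g (f # be) = phiL (phi g f) be"

fun cL :: "'g \<Rightarrow> 'e list \<Rightarrow> 'l" where
  "cL g [] = 1"
| "cL g (f # be) = c g f * cL (phi g f) be"

lemma phiL_closed[simp]: "g \<in> carrier G \<Longrightarrow> phiL g al \<in> carrier G"
  by (induction al arbitrary: g) auto

lemma L_one[simp]: "actL \<one>\<^bsub>G\<^esub> al = al" "phiL \<one>\<^bsub>G\<^esub> al = \<one>\<^bsub>G\<^esub>" "cL \<one>\<^bsub>G\<^esub> al = 1"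
  by (induction al) (auto simp: acte1)

lemma L_mult:
  assumes "g \<in> carrier G" "h \<in> carrier G"
  shows "actL (g \<otimes>\<^bsub>G\<^esub> h) al = actL g (actL h al)
    \<and> phiL (g \<otimes>\<^bsub>G\<^esub> h) al = phiL g (actL h al) \<otimes>\<^bsub>G\<^esub> phiL h al
    \<and> cL (g \<otimes>\<^bsub>G\<^esub> h) al = cL g (actL h al) * cL h al"
  using assms
  by (induction al arbitrary: g h) (auto simp: acte_mult phi_mult c_mult)

end

lemma fmul_fmon_left:
  "fmul (fmon u) q w = (if take (length u) w = u then q (drop (length u) w) else 0)"
proof -
  have "fmul (fmon u) q w = (\<Sum>i\<in>{0..length w}. if take i w = u then q (drop i w) else 0)"
    by (auto simp: fmul_def fmon_def intro!: sum.cong)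
  also have "\<dots> = (\<Sum>i\<in>{0..length w} \<inter> {length u}. if take i w = u then q (drop i w) else 0)"
    by (rule sum.mono_neutral_right) auto
  also have "\<dots> = (if take (length u) w = u then q (drop (length u) w) else 0)"
    by (cases "length u \<le> length w") (auto)
  finally show ?thesis .
qed

lemma fmul_fmon_right:
  "fmul q (fmon v) w = (if drop (length w - length v) w = v \<and> length v \<le> length w
      then q (take (length w - length v) w) else 0)"
proof -
  have "fmul q (fmon v) w = (\<Sum>i\<in>{0..length w}. if drop i w = v then q (take i w) else 0)"
    by (auto simp: fmul_def fmon_def intro!: sum.cong)
  also have "\<dots> = (\<Sum>i\<in>{0..length w} \<inter> {length w - length v}. if drop i w = v then q (take i w) else 0)"
    by (rule sum.mono_neutral_right) auto
  also have "\<dots> = (if drop (length w - length v) w = v \<and> length v \<le> length w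
      then q (take (length w - length v) w) else 0)"
  proof (cases "length v \<le> length w")
    case False
    then have "length w - length v = 0" by simp
    moreover have "drop 0 w \<noteq> v" using False by auto
    ultimately show ?thesis using False by simp
  qed auto
  finally show ?thesis .
qed

lemma gen_form:
  "fmul (fmul (fmon u) q) (fmon v) w = (if \<exists>z. w = u @ z @ v then q (THE z. w = u @ z @ v) else 0)"
proof (cases "\<exists>z. w = u @ z @ v")
  case True
  then obtain z where z: "w = u @ z @ v" by blast
  have the: "(THE z. w = u @ z @ v) = z" using z by auto
  show ?thesis using z the by (simp add: fmul_fmon_left fmul_fmon_right)
next
  case False
  have "q (drop (length u) (take (length w - length v) w)) = 0"
    if a: "take (length u) (take (length w - length v) w) = u"
      "drop (length w - length v) w = v" "length v \<le> length w"
  proof -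
    have "w = take (length w - length v) w @ v" using a(2) by (metis append_take_drop_id)
    also have "take (length w - length v) w = u @ drop (length u) (take (length w - length v) w)"
      using a(1) by (metis append_take_drop_id)
    finally have "w = u @ drop (length u) (take (length w - length v) w) @ v" by simp
    then show ?thesis using False by blast
  qed
  then show ?thesis using False
    by (simp add: fmul_fmon_left fmul_fmon_right)
qed


context EPt begin

fun T :: "('v,'e,'g) cgen \<Rightarrow> 'v \<times> 'e list \<times> 'g \<Rightarrow> 'l \<times> ('v \<times> 'e list \<times> 'g)" where
  "T (Ed f) (v, al, k) = (if r f = v \<and> k \<in> carrier G then (1, (s f, f # al, k)) else (0, (v, al, k)))"
| "T (Es f) (v, al, k) = (if al \<noteq> [] \<and> hd al = f \<and> v = s f \<and> k \<in> carrier G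
      then (1, (r f, tl al, k)) else (0, (v, al, k)))"
| "T (Vg w g) (v, al, k) = (if w = actv g v \<and> k \<in> carrier G \<and> g \<in> carrier G
      then (cL g al, (actv g v, actL g al, phiL g al \<otimes>\<^bsub>G\<^esub> k)) else (0, (v, al, k)))"

definition comp :: "('x \<Rightarrow> 'l \<times> 'x) \<Rightarrow> ('x \<Rightarrow> 'l \<times> 'x) \<Rightarrow> 'x \<Rightarrow> 'l \<times> 'x" where
  "comp m1 m2 = (\<lambda>x. (fst (m1 (snd (m2 x))) * fst (m2 x), snd (m1 (snd (m2 x)))))"

fun W :: "('v,'e,'g) cgen list \<Rightarrow> 'v \<times> 'e list \<times> 'g \<Rightarrow> 'l \<times> ('v \<times> 'e list \<times> 'g)" where
  "W [] = (\<lambda>x. (1, x))"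
| "W (a # w) = comp (T a) (W w)"

definition mat :: "('x \<Rightarrow> 'l \<times> 'x) \<Rightarrow> 'x \<Rightarrow> 'x \<Rightarrow> 'l" where
  "mat m x y = (if snd (m x) = y then fst (m x) else 0)"

lemma W1': "W [a] = T a"
  by (simp add: comp_def)

lemma R1: "mat (W [Ed f]) x y = 1 * mat (W [Vg (s f) \<one>\<^bsub>G\<^esub>, Ed f, Vg (r f) \<one>\<^bsub>G\<^esub>]) x y"
  by (cases x) (auto simp: comp_def mat_def actv1 acte1)

lemma R2: "mat (W [Es f]) x y = 1 * mat (W [Vg (r f) \<one>\<^bsub>G\<^esub>, Es f, Vg (s f) \<one>\<^bsub>G\<^esub>]) x y"
  by (cases x) (auto simp: comp_def mat_def actv1)

lemma R3: "mat (W [Es f, Ed f']) x y = (if f = f' then 1 else 0) * mat (W [Vg (r f) \<one>\<^bsub>G\<^esub>]) x y"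
  by (cases x) (auto simp: comp_def mat_def actv1)

lemma R4: "g \<in> carrier G \<Longrightarrow> h \<in> carrier G \<Longrightarrow>
  mat (W [Vg v g, Vg w h]) x y = (if v = actv g w then 1 else 0) * mat (W [Vg v (g \<otimes>\<^bsub>G\<^esub> h)]) x y"
  by (cases x) (auto simp: comp_def mat_def actv_mult L_mult m_assoc mult.commute)

lemma R5: "g \<in> carrier G \<Longrightarrow>
  mat (W [Vg v g, Ed f]) x y = (if v = actv g (s f) then c g f else 0) *
     mat (W [Ed (acte g f), Vg (r (acte g f)) (phi g f)]) x y"
  by (cases x) (auto simp: comp_def mat_def s_act r_act)

lemma R6: "g \<in> carrier G \<Longrightarrow>
  mat (W [Es f, Vg v g]) x y = (if v = s f then c g (acte (inv\<^bsub>G\<^esub> g) f) else 0) *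
     mat (W [Vg (r f) (phi g (acte (inv\<^bsub>G\<^esub> g) f)), Es (acte (inv\<^bsub>G\<^esub> g) f)]) x y"
proof -
  assume g: "g \<in> carrier G"
  obtain u al k where x: "x = (u, al, k)" by (cases x)
  have e1: "acte g a = f \<longleftrightarrow> a = acte (inv\<^bsub>G\<^esub> g) f" for a
    using g by auto
  have e2: "s f = actv g u \<longleftrightarrow> u = s (acte (inv\<^bsub>G\<^esub> g) f)"
    using g by (auto simp: s_act)
  have e3: "r (acte (inv\<^bsub>G\<^esub> g) f) = actv (inv\<^bsub>G\<^esub> g) (r f)"
    using g by (simp add: r_act)
  show ?thesis
    using g unfolding x
    by (cases al) (auto simp: comp_def mat_def e1 e2 e3 m_assoc)
qed

end

lemma fsmult1: "fmon w = fsmult 1 (fmon w)" by (simp add: fsmult_def)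
lemma fzero0: "fzero = fsmult 0 (fmon w)" by (simp add: fsmult_def fzero_def)
lemma if_fs: "(if P then fsmult a q else fzero) = fsmult (if P then a else 0) q"
  by (auto simp: fsmult_def fzero_def)
lemma if_fs1: "(if P then fmon w else fzero) = fsmult (if P then 1 else 0) (fmon w)"
  by (auto simp: fsmult_def fzero_def fmon_def)

context EPt begin

lemma rel_form:
  assumes "\<rho> \<in> cohn_rels G r s actv acte phi c"
  shows "\<exists>w1 w2 a. \<rho> = fdiff (fmon w1) (fsmult a (fmon w2)) \<and> (\<forall>x y. mat (W w1) x y = a * mat (W w2) x y)"
  using assms unfolding cohn_rels_def
  apply (elim UnE CollectE exE conjE)
  subgoal for f
    apply (rule exI[of _ "[Ed f]"], rule exI[of _ "[Vg (s f) \<one>\<^bsub>G\<^esub>, Ed f, Vg (r f) \<one>\<^bsub>G\<^esub>]"], rule exI[of _ 1])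
    using R1[of f] by (simp only: fsmult1[symmetric]) simp
  subgoal for f
    apply (rule exI[of _ "[Es f]"], rule exI[of _ "[Vg (r f) \<one>\<^bsub>G\<^esub>, Es f, Vg (s f) \<one>\<^bsub>G\<^esub>]"], rule exI[of _ 1])
    using R2[of f] by (simp only: fsmult1[symmetric]) simp
  subgoal for f f'
    apply (rule exI[of _ "[Es f, Ed f']"], rule exI[of _ "[Vg (r f) \<one>\<^bsub>G\<^esub>]"], rule exI[of _ "if f = f' then 1 else 0"])
    using R3[of f f'] by (simp only: if_fs1[symmetric]) simp
  subgoal for v w g h
    apply (rule exI[of _ "[Vg v g, Vg w h]"], rule exI[of _ "[Vg v (g \<otimes>\<^bsub>G\<^esub> h)]"], rule exI[of _ "if v = actv g w then 1 else 0"])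
    using R4[of g h v w] by (simp only: if_fs1[symmetric]) simp
  subgoal for v g f
    apply (rule exI[of _ "[Vg v g, Ed f]"], rule exI[of _ "[Ed (acte g f), Vg (r (acte g f)) (phi g f)]"], rule exI[of _ "if v = actv g (s f) then c g f else 0"])
    using R5[of g v f] by (simp only: if_fs[symmetric]) simp
  subgoal for v g f
    apply (rule exI[of _ "[Es f, Vg v g]"], rule exI[of _ "[Vg (r f) (phi g (acte (inv\<^bsub>G\<^esub> g) f)), Es (acte (inv\<^bsub>G\<^esub> g) f)]"], rule exI[of _ "if v = s f then c g (acte (inv\<^bsub>G\<^esub> g) f) else 0"])
    using R6[of g f v] by (simp only: if_fs[symmetric]) simp
  done

end

context EPt begin

definition ev :: "(('v,'e,'g) cgen list \<Rightarrow> 'l) \<Rightarrow> 'v \<times> 'e list \<times> 'g \<Rightarrow> 'v \<times> 'e list \<times> 'g \<Rightarrow> 'l" where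
  "ev p x y = (\<Sum>w\<in>{w. p w \<noteq> 0}. p w * mat (W w) x y)"

lemma ev_sup: "finite S \<Longrightarrow> {w. p w \<noteq> 0} \<subseteq> S \<Longrightarrow> ev p x y = (\<Sum>w\<in>S. p w * mat (W w) x y)"
  unfolding ev_def by (rule sum.mono_neutral_left) auto

lemma comp_assoc: "comp a (comp b d) = comp (comp a b) d"
  by (rule ext) (simp add: comp_def mult.assoc)

lemma W_append: "W (u @ w) = comp (W u) (W w)"
proof (induction u)
  case Nil
  then show ?case by (auto simp: comp_def)
next
  case (Cons a u)
  then show ?case by (simp add: comp_assoc)
qed

lemma mat_comp: "mat (comp m1 m2) x y = fst (m2 x) * mat m1 (snd (m2 x)) y"
  by (simp add: mat_def comp_def)

lemma rel_ev:
  assumes "\<rho> \<in> cohn_rels G r s actv acte phi c"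
  shows "finite {w. \<rho> w \<noteq> 0} \<and> (\<forall>x y. ev \<rho> x y = 0)"
proof -
  obtain w1 w2 a where rho: "\<rho> = fdiff (fmon w1) (fsmult a (fmon w2))"
    and m: "\<And>x y. mat (W w1) x y = a * mat (W w2) x y"
    using rel_form[OF assms] by blast
  have sub: "{w. \<rho> w \<noteq> 0} \<subseteq> {w1, w2}"
    by (auto simp: rho fdiff_def fsmult_def fmon_def)
  have "ev \<rho> x y = 0" for x y
  proof (cases "w1 = w2")
    case True
    have "ev \<rho> x y = (\<Sum>w\<in>{w1}. \<rho> w * mat (W w) x y)"
      using sub True by (intro ev_sup) auto
    also have "\<dots> = (1 - a) * mat (W w1) x y"
      using True by (simp add: rho fdiff_def fsmult_def fmon_def)
    also have "\<dots> = 0" using m[of x y] True by (simp add: algebra_simps)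
    finally show ?thesis .
  next
    case False
    have "ev \<rho> x y = (\<Sum>w\<in>{w1,w2}. \<rho> w * mat (W w) x y)"
      using sub by (intro ev_sup) auto
    also have "\<dots> = mat (W w1) x y - a * mat (W w2) x y"
      using False by (simp add: rho fdiff_def fsmult_def fmon_def)
    also have "\<dots> = 0" using m[of x y] by simp
    finally show ?thesis .
  qed
  moreover have "finite {w. \<rho> w \<noteq> 0}" using sub by (rule finite_subset) simp
  ultimately show ?thesis by blast
qed

lemma gen_ev:
  fixes a :: 'l and u v :: "('v,'e,'g) cgen list"
  assumes fin: "finite {w. \<rho> w \<noteq> 0}" and z: "\<And>x y. ev \<rho> x y = 0"
  defines "q \<equiv> fsmult a (fmul (fmul (fmon u) \<rho>) (fmon v))"
  shows "finite {w. q w \<noteq> 0} \<and> (\<forall>x y. ev q x y = 0)"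
proof -
  define Z where "Z = {w. \<rho> w \<noteq> 0}"
  define h where "h = (\<lambda>z. u @ z @ v)"
  have qh: "q (h z) = a * \<rho> z" for z
    by (simp add: q_def fsmult_def gen_form h_def)
  have sub: "{w. q w \<noteq> 0} \<subseteq> h ` Z"
  proof
    fix w assume "w \<in> {w. q w \<noteq> 0}"
    then have "q w \<noteq> 0" by simp
    then obtain zz where "w = h zz" unfolding q_def fsmult_def gen_form h_def by (auto split: if_splits)
    then show "w \<in> h ` Z" using \<open>q w \<noteq> 0\<close> qh Z_def by auto
  qed
  have finZ: "finite Z" using fin Z_def by simp
  have inj: "inj_on h Z" by (auto simp: inj_on_def h_def)
  have "ev q x y = 0" for x y
  proof -
    define x' where "x' = snd (W v x)"
    define M where "M = (\<lambda>y'. mat (W u) y' y)"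
    define Y where "Y = (\<lambda>z. snd (W z x')) ` Z"
    have finY: "finite Y" using finZ Y_def by simp
    have key: "(\<Sum>z\<in>Z. \<rho> z * (fst (W z x') * M (snd (W z x')))) = 0"
    proof -
      have "0 = (\<Sum>y'\<in>Y. ev \<rho> x' y' * M y')" using z by simp
      also have "\<dots> = (\<Sum>y'\<in>Y. \<Sum>z\<in>Z. \<rho> z * mat (W z) x' y' * M y')"
        using ev_sup[OF finZ] Z_def by (simp add: sum_distrib_right)
      also have "\<dots> = (\<Sum>z\<in>Z. \<Sum>y'\<in>Y. \<rho> z * mat (W z) x' y' * M y')"
        by (rule sum.swap)
      also have "\<dots> = (\<Sum>z\<in>Z. \<rho> z * (fst (W z x') * M (snd (W z x'))))"
      proof (rule sum.cong[OF refl])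
        fix zz assume "zz \<in> Z"
        then have inY: "snd (W zz x') \<in> Y" using Y_def by simp
        have "(\<Sum>y'\<in>Y. \<rho> zz * mat (W zz) x' y' * M y')
            = (\<Sum>y'\<in>Y. if snd (W zz x') = y' then \<rho> zz * fst (W zz x') * M y' else 0)"
          by (rule sum.cong) (auto simp: mat_def)
        also have "\<dots> = \<rho> zz * fst (W zz x') * M (snd (W zz x'))"
          using finY inY by (simp add: sum.delta)
        finally show "(\<Sum>y'\<in>Y. \<rho> zz * mat (W zz) x' y' * M y') = \<rho> zz * (fst (W zz x') * M (snd (W zz x')))"
          by (simp add: mult.assoc)
      qed
      finally show ?thesis by simp
    qed
    have "ev q x y = (\<Sum>w\<in>h ` Z. q w * mat (W w) x y)"
      using sub finZ by (intro ev_sup) auto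
    also have "\<dots> = (\<Sum>z\<in>Z. q (h z) * mat (W (h z)) x y)"
      using inj by (simp add: sum.reindex)
    also have "\<dots> = (\<Sum>z\<in>Z. a * fst (W v x) * (\<rho> z * (fst (W z x') * M (snd (W z x')))))"
      by (rule sum.cong[OF refl])
        (simp add: qh[unfolded h_def] h_def W_append comp_assoc mat_comp x'_def M_def mult_ac)
    also have "\<dots> = a * fst (W v x) * (\<Sum>z\<in>Z. \<rho> z * (fst (W z x') * M (snd (W z x'))))"
      by (simp add: sum_distrib_left)
    also have "\<dots> = 0" using key by simp
    finally show ?thesis .
  qed
  moreover have "finite {w. q w \<noteq> 0}" using sub finZ by (meson finite_imageI finite_subset)
  ultimately show ?thesis by blast
qed

lemma ideal_ev:
  assumes "p \<in> gen_ideal (cohn_rels G r s actv acte phi c)"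
  shows "finite {w. p w \<noteq> 0} \<and> (\<forall>x y. ev p x y = 0)"
  using assms
proof (induction rule: gen_ideal.induct)
  case zero
  then show ?case by (simp add: fzero_def ev_def)
next
  case (gen \<rho> a u v)
  then show ?case using rel_ev gen_ev by blast
next
  case (add x y)
  have sub: "{w. fadd x y w \<noteq> 0} \<subseteq> {w. x w \<noteq> 0} \<union> {w. y w \<noteq> 0}"
    by (auto simp: fadd_def)
  have fin: "finite ({w. x w \<noteq> 0} \<union> {w. y w \<noteq> 0})" using add by simp
  have "ev (fadd x y) a b = 0" for a b
  proof -
    have "ev (fadd x y) a b = (\<Sum>w\<in>{w. x w \<noteq> 0} \<union> {w. y w \<noteq> 0}. fadd x y w * mat (W w) a b)"
      using sub fin by (intro ev_sup) auto
    also have "\<dots> = (\<Sum>w\<in>{w. x w \<noteq> 0} \<union> {w. y w \<noteq> 0}. x w * mat (W w) a b)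
        + (\<Sum>w\<in>{w. x w \<noteq> 0} \<union> {w. y w \<noteq> 0}. y w * mat (W w) a b)"
      by (simp add: fadd_def distrib_right sum.distrib)
    also have "\<dots> = ev x a b + ev y a b"
    proof -
      have "ev x a b = (\<Sum>w\<in>{w. x w \<noteq> 0} \<union> {w. y w \<noteq> 0}. x w * mat (W w) a b)"
        using fin by (intro ev_sup) auto
      moreover have "ev y a b = (\<Sum>w\<in>{w. x w \<noteq> 0} \<union> {w. y w \<noteq> 0}. y w * mat (W w) a b)"
        using fin by (intro ev_sup) auto
      ultimately show ?thesis by simp
    qed
    also have "\<dots> = 0"
    proof -
      have "ev x a b = 0" "ev y a b = 0" using add.IH by blast+
      then show ?thesis by simp
    qed
    finally show ?thesis .
  qed
  then show ?case using sub fin finite_subset by blast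
qed

end

lemma L_fmon: "fmul (fmul (fmon u) (fmon z)) (fmon v) w = fmon (u @ z @ v) w"
proof (cases "\<exists>z'. w = u @ z' @ v")
  case True
  then obtain z' where z': "w = u @ z' @ v" by blast
  have "(THE z. w = u @ z @ v) = z'" using z' by auto
  then show ?thesis apply (subst gen_form) using z' by (auto simp: fmon_def)
next
  case False
  then show ?thesis apply (subst gen_form) by (auto simp: fmon_def)
qed

lemma L_diff: "fmul (fmul (fmon u) (fdiff p q)) (fmon v) w
   = fmul (fmul (fmon u) p) (fmon v) w - fmul (fmul (fmon u) q) (fmon v) w"
  by (simp add: gen_form fdiff_def)

lemma L_smult: "fmul (fmul (fmon u) (fsmult a p)) (fmon v) w = a * fmul (fmul (fmon u) p) (fmon v) w"
  by (simp add: gen_form fsmult_def)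

context EPt begin

lemma nabla_one: "nabla G acte phi e \<one>\<^bsub>G\<^esub> = (e, \<one>\<^bsub>G\<^esub>)"
  by (simp add: nabla_def acte1)

lemma ii_iii:
  assumes "\<forall>g\<in>carrier G. acte g e = e \<and> phi g e = \<one>\<^bsub>G\<^esub> \<longrightarrow> g = \<one>\<^bsub>G\<^esub>"
  shows "inj_on (nabla G acte phi e) (carrier G)"
proof (rule inj_onI)
  fix g h assume g: "g \<in> carrier G" and h: "h \<in> carrier G"
    and eq: "nabla G acte phi e g = nabla G acte phi e h"
  define f where "f = acte (inv\<^bsub>G\<^esub> g) e"
  have f2: "acte (inv\<^bsub>G\<^esub> h) e = f" and pf: "phi g f = phi h f"
    using eq by (auto simp: nabla_def f_def)
  define j where "j = g \<otimes>\<^bsub>G\<^esub> inv\<^bsub>G\<^esub> h"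
  have j: "j \<in> carrier G" using g h j_def by simp
  have "acte j e = e" using g h f2 by (simp add: j_def acte_mult f_def)
  moreover have "phi j e = \<one>\<^bsub>G\<^esub>"
  proof -
    have "phi j e = phi g f \<otimes>\<^bsub>G\<^esub> phi (inv\<^bsub>G\<^esub> h) e"
      using g h f2 by (simp add: j_def phi_mult)
    also have "\<dots> = phi h f \<otimes>\<^bsub>G\<^esub> phi (inv\<^bsub>G\<^esub> h) e" using pf by simp
    also have "\<dots> = phi (h \<otimes>\<^bsub>G\<^esub> inv\<^bsub>G\<^esub> h) e"
      by (simp only: phi_mult[OF h inv_closed[OF h]] f2)
    also have "\<dots> = \<one>\<^bsub>G\<^esub>" using h by simp
    finally show ?thesis .
  qed
  ultimately have "j = \<one>\<^bsub>G\<^esub>" using assms j by blast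
  then show "g = h" using g h unfolding j_def
    by (metis inv_closed inv_equality inv_inv)
qed

lemma iii_ii:
  assumes "inj_on (nabla G acte phi e) (carrier G)"
  shows "\<forall>g\<in>carrier G. acte g e = e \<and> phi g e = \<one>\<^bsub>G\<^esub> \<longrightarrow> g = \<one>\<^bsub>G\<^esub>"
proof (intro ballI impI)
  fix g assume g: "g \<in> carrier G" and fx: "acte g e = e \<and> phi g e = \<one>\<^bsub>G\<^esub>"
  have "acte (inv\<^bsub>G\<^esub> g) e = e" using g fx by (metis acte_inv1)
  then have "nabla G acte phi e g = nabla G acte phi e \<one>\<^bsub>G\<^esub>"
    using fx by (simp add: nabla_def acte1)
  then show "g = \<one>\<^bsub>G\<^esub>" using assms g by (meson inj_onD one_closed)
qed

lemma wd_val: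
  assumes g: "g \<in> carrier G"
  shows "mat (W [Ed e, Es e, Vg (s e) g]) (s f, [f], \<one>\<^bsub>G\<^esub>) (s e, [e], k)
     = (if acte g f = e \<and> phi g f = k then c g f else 0)"
  using g by (auto simp: comp_def mat_def s_act)

end

context EPt begin

definition wd :: "'e \<Rightarrow> 'g \<Rightarrow> ('v,'e,'g) cgen list" where
  "wd f k = [Ed f, Es f, Vg (s f) k]"

lemma ann_zero:
  assumes inj: "inj_on (nabla G acte phi e) (carrier G)"
    and lam: "lam \<in> EP_Ann G r s actv acte phi c e"
  shows "lam = (\<lambda>_. 0)"
proof (rule ccontr)
  assume "lam \<noteq> (\<lambda>_. 0)"
  then obtain g0 where l0: "lam g0 \<noteq> 0" by auto
  define S where "S = {g. lam g \<noteq> 0}"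
  have finS: "finite S" and Sc: "S \<subseteq> carrier G"
    and p: "cohn_zero G r s actv acte phi c (\<lambda>w. \<Sum>g\<in>S. lam g * fmon (wd e g) w)"
    using lam unfolding EP_Ann_def S_def wd_def by auto
  define p where "p = (\<lambda>w. \<Sum>g\<in>S. lam g * fmon (wd e g) w)"
  have g0: "g0 \<in> S" "g0 \<in> carrier G" using l0 Sc S_def by auto
  define f where "f = acte (inv\<^bsub>G\<^esub> g0) e"
  have ev0: "ev p (s f, [f], \<one>\<^bsub>G\<^esub>) (s e, [e], phi g0 f) = 0"
    using ideal_ev p unfolding cohn_zero_def p_def by blast
  have injwd: "inj_on (wd e) S" by (auto simp: inj_on_def wd_def)
  have pk: "p (wd e k) = lam k" if "k \<in> S" for k
  proof -
    have "p (wd e k) = (\<Sum>h\<in>S. if k = h then lam h else 0)"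
      unfolding p_def by (rule sum.cong) (auto simp: fmon_def wd_def)
    also have "\<dots> = lam k" using finS that by (simp add: sum.delta)
    finally show ?thesis .
  qed
  have sub: "{w. p w \<noteq> 0} \<subseteq> wd e ` S"
  proof
    fix w assume "w \<in> {w. p w \<noteq> 0}"
    then have "p w \<noteq> 0" by simp
    then obtain k where "k \<in> S" "fmon (wd e k) w \<noteq> (0::'l)"
      unfolding p_def by (metis (no_types, lifting) mult_zero_right sum.neutral)
    then show "w \<in> wd e ` S" by (auto simp: fmon_def split: if_splits)
  qed
  have cond: "(acte k f = e \<and> phi k f = phi g0 f) \<longleftrightarrow> k = g0" if "k \<in> S" for k
  proof
    assume a: "acte k f = e \<and> phi k f = phi g0 f"
    have k: "k \<in> carrier G" using that Sc by auto
    have "acte (inv\<^bsub>G\<^esub> k) e = f" using a k by (metis acte_inv1)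
    then have "nabla G acte phi e k = nabla G acte phi e g0"
      using a by (simp add: nabla_def f_def)
    then show "k = g0" using inj k g0 by (meson inj_onD)
  next
    assume "k = g0" then show "acte k f = e \<and> phi k f = phi g0 f"
      using g0 by (simp add: f_def)
  qed
  have "ev p (s f, [f], \<one>\<^bsub>G\<^esub>) (s e, [e], phi g0 f)
      = (\<Sum>w\<in>wd e ` S. p w * mat (W w) (s f, [f], \<one>\<^bsub>G\<^esub>) (s e, [e], phi g0 f))"
    using sub finS by (intro ev_sup) auto
  also have "\<dots> = (\<Sum>k\<in>S. p (wd e k) * mat (W (wd e k)) (s f, [f], \<one>\<^bsub>G\<^esub>) (s e, [e], phi g0 f))"
    using injwd by (simp add: sum.reindex)
  also have "\<dots> = (\<Sum>k\<in>S. if g0 = k then lam k * c k f else 0)"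
  proof (rule sum.cong[OF refl])
    fix k assume k: "k \<in> S"
    then have kc: "k \<in> carrier G" using Sc by auto
    show "p (wd e k) * mat (W (wd e k)) (s f, [f], \<one>\<^bsub>G\<^esub>) (s e, [e], phi g0 f)
        = (if g0 = k then lam k * c k f else 0)"
      using pk[OF k] wd_val[OF kc, of e f "phi g0 f"] cond[OF k] unfolding wd_def
      by auto
  qed
  also have "\<dots> = lam g0 * c g0 f" using finS g0 by (simp add: sum.delta)
  finally have z: "lam g0 * c g0 f = 0" using ev0 by simp
  obtain u where u: "1 = c g0 f * u" using c_unit[OF g0(2), of f] by (auto elim: dvdE)
  have "lam g0 = lam g0 * c g0 f * u" using u by (metis mult.assoc mult.right_neutral)
  then have "lam g0 = 0" using z by simp
  then show False using l0 by simp
qed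

lemma ann_nonzero:
  assumes nz: "(0::'l) \<noteq> 1" and g: "g \<in> carrier G" and g1: "g \<noteq> \<one>\<^bsub>G\<^esub>"
    and fx: "acte g e = e" "phi g e = \<one>\<^bsub>G\<^esub>"
  shows "\<exists>lam \<in> EP_Ann G r s actv acte phi c e. lam \<noteq> (\<lambda>_. 0)"
proof -
  define lam where "lam = (\<lambda>k. if k = \<one>\<^bsub>G\<^esub> then c g e else if k = g then -1 else (0::'l))"
  have cnz: "c g e \<noteq> 0"
  proof
    assume "c g e = 0"
    moreover obtain u where "1 = c g e * u" using c_unit[OF g, of e] by (auto elim: dvdE)
    ultimately show False using nz by simp
  qed
  have S: "{k. lam k \<noteq> 0} = {\<one>\<^bsub>G\<^esub>, g}" using cnz g1 by (auto simp: lam_def)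
  have ie: "acte (inv\<^bsub>G\<^esub> g) e = e" using g fx by (metis acte_inv1)
  define \<rho>1 where "\<rho>1 = fdiff (fmon [Es e, Vg (s e) \<one>\<^bsub>G\<^esub>])
            (if s e = s e
             then fsmult (c \<one>\<^bsub>G\<^esub> (acte (inv\<^bsub>G\<^esub> \<one>\<^bsub>G\<^esub>) e))
                    (fmon [Vg (r e) (phi \<one>\<^bsub>G\<^esub> (acte (inv\<^bsub>G\<^esub> \<one>\<^bsub>G\<^esub>) e)), Es (acte (inv\<^bsub>G\<^esub> \<one>\<^bsub>G\<^esub>) e)])
             else fzero)"
  define \<rho>g where "\<rho>g = fdiff (fmon [Es e, Vg (s e) g])
            (if s e = s e
             then fsmult (c g (acte (inv\<^bsub>G\<^esub> g) e))
                    (fmon [Vg (r e) (phi g (acte (inv\<^bsub>G\<^esub> g) e)), Es (acte (inv\<^bsub>G\<^esub> g) e)])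
             else fzero)"
  have r1: "\<rho>1 \<in> cohn_rels G r s actv acte phi c"
    unfolding cohn_rels_def \<rho>1_def by blast
  have rg: "\<rho>g \<in> cohn_rels G r s actv acte phi c"
    unfolding cohn_rels_def \<rho>g_def using g by blast
  have r1': "\<rho>1 = fdiff (fmon [Es e, Vg (s e) \<one>\<^bsub>G\<^esub>]) (fsmult 1 (fmon [Vg (r e) \<one>\<^bsub>G\<^esub>, Es e]))"
    unfolding \<rho>1_def by (simp add: acte1)
  have rg': "\<rho>g = fdiff (fmon [Es e, Vg (s e) g]) (fsmult (c g e) (fmon [Vg (r e) \<one>\<^bsub>G\<^esub>, Es e]))"
    unfolding \<rho>g_def by (simp add: ie fx)
  define X1 where "X1 = fsmult (c g e) (fmul (fmul (fmon [Ed e]) \<rho>1) (fmon []))"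
  define X2 where "X2 = fsmult (-1) (fmul (fmul (fmon [Ed e]) \<rho>g) (fmon []))"
  have mem: "fadd X1 X2 \<in> gen_ideal (cohn_rels G r s actv acte phi c)"
    unfolding X1_def X2_def using r1 rg by (intro gen_ideal.add gen_ideal.gen)
  have eq: "(\<lambda>w. \<Sum>k\<in>{k. lam k \<noteq> 0}. lam k * fmon [Ed e, Es e, Vg (s e) k] w) = fadd X1 X2"
  proof
    fix w
    have "(\<Sum>k\<in>{k. lam k \<noteq> 0}. lam k * fmon [Ed e, Es e, Vg (s e) k] w)
        = c g e * fmon [Ed e, Es e, Vg (s e) \<one>\<^bsub>G\<^esub>] w - fmon [Ed e, Es e, Vg (s e) g] w"
      using g1 unfolding S by (simp add: lam_def)
    also have "\<dots> = fadd X1 X2 w"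
      unfolding X1_def X2_def fadd_def r1' rg' L_diff L_smult L_fmon
      by (simp add: fsmult_def algebra_simps)
    finally show "(\<Sum>k\<in>{k. lam k \<noteq> 0}. lam k * fmon [Ed e, Es e, Vg (s e) k] w) = fadd X1 X2 w" .
  qed
  have "lam \<in> EP_Ann G r s actv acte phi c e"
    unfolding EP_Ann_def cohn_zero_def using S g eq mem by (auto simp: lam_def)
  moreover have "lam \<noteq> (\<lambda>_. 0)"
  proof
    assume "lam = (\<lambda>_. 0)"
    then have "lam g = 0" by simp
    then show False using g1 by (simp add: lam_def)
  qed
  ultimately show ?thesis by blast
qed

end

theorem lemma3p6:
  fixes G :: "('g, 'm) monoid_scheme"
    and r s :: "'e \<Rightarrow> 'v"
    and actv :: "'g \<Rightarrow> 'v \<Rightarrow> 'v" and acte :: "'g \<Rightarrow> 'e \<Rightarrow> 'e"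
    and phi :: "'g \<Rightarrow> 'e \<Rightarrow> 'g" and c :: "'g \<Rightarrow> 'e \<Rightarrow> 'l::comm_ring_1"
    and e :: 'e
  assumes "twisted_EP_tuple G r s actv acte phi c"
    and "(0::'l) \<noteq> 1"
  shows "(EP_Ann G r s actv acte phi c e = {\<lambda>_. 0}
            \<longleftrightarrow> (\<forall>g\<in>carrier G. acte g e = e \<and> phi g e = \<one>\<^bsub>G\<^esub> \<longrightarrow> g = \<one>\<^bsub>G\<^esub>))
       \<and> ((\<forall>g\<in>carrier G. acte g e = e \<and> phi g e = \<one>\<^bsub>G\<^esub> \<longrightarrow> g = \<one>\<^bsub>G\<^esub>)
            \<longleftrightarrow> inj_on (nabla G acte phi e) (carrier G))"
proof -
  interpret EPt G r s actv acte phi c using assms(1) by unfold_locales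
  have zero_in: "(\<lambda>_. 0) \<in> EP_Ann G r s actv acte phi c e"
    unfolding EP_Ann_def cohn_zero_def
    using gen_ideal.zero[of "cohn_rels G r s actv acte phi c"]
    by (simp add: fzero_def)
  have A: "EP_Ann G r s actv acte phi c e = {\<lambda>_. 0}
            \<longleftrightarrow> (\<forall>g\<in>carrier G. acte g e = e \<and> phi g e = \<one>\<^bsub>G\<^esub> \<longrightarrow> g = \<one>\<^bsub>G\<^esub>)"
  proof
    assume h: "EP_Ann G r s actv acte phi c e = {\<lambda>_. 0}"
    show "\<forall>g\<in>carrier G. acte g e = e \<and> phi g e = \<one>\<^bsub>G\<^esub> \<longrightarrow> g = \<one>\<^bsub>G\<^esub>"
    proof (intro ballI impI)
      fix g assume g: "g \<in> carrier G" and fx: "acte g e = e \<and> phi g e = \<one>\<^bsub>G\<^esub>"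
      show "g = \<one>\<^bsub>G\<^esub>"
      proof (rule ccontr)
        assume "g \<noteq> \<one>\<^bsub>G\<^esub>"
        then obtain lam where "lam \<in> EP_Ann G r s actv acte phi c e" "lam \<noteq> (\<lambda>_. 0)"
          using ann_nonzero[OF assms(2) g] fx by blast
        then show False using h by simp
      qed
    qed
  next
    assume h: "\<forall>g\<in>carrier G. acte g e = e \<and> phi g e = \<one>\<^bsub>G\<^esub> \<longrightarrow> g = \<one>\<^bsub>G\<^esub>"
    have inj: "inj_on (nabla G acte phi e) (carrier G)" using ii_iii[OF h] .
    show "EP_Ann G r s actv acte phi c e = {\<lambda>_. 0}"
      using ann_zero[OF inj] zero_in by blast
  qed
  show ?thesis using A ii_iii iii_ii by blast
qed

end
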